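(* Let $X\ge 1$. Let $\mathcal{Q}$ be a set of pairwise coprime positive integers with $\prod_{q \in \mathcal{Q}} q \ge X$. Let $P \subseteq \{1,\dots,X\}$ be an arithmetic progression of length at least $X^{3/4}$ whose common difference is coprime to all $q \in \mathcal{Q}$. Let $d, m \ge 1$ be integers with $(\max_{q \in \mathcal{Q}} q)^{dm} \le X^{1/16}$. Let $\Gamma := \pi_{\mathcal{Q}}(P)\subseteq G_{\mathcal{Q}}$. Let $f \in B(P)$ with $\mathbb{E}_{x\in P} |f(x)| = \alpha$, and let $g := \Psi_{P,\mathcal{Q}} f \in B(G_{\mathcal{Q}})$. Then \[ \mathbb{E}_{x\in\Gamma} |W_{d} g(x)|^{2m} \le \mathbb{E}_{x\in G_{\mathcal{Q}}} |W_{d} g(x)|^{2m} + \alpha^{2m} X^{-1/4}.\]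
   Context: $B(\Sigma)$ denotes the space of complex-valued functions on a finite set $\Sigma$. $G_{\mathcal{Q}} := \prod_{q\in\mathcal{Q}} \mathbb{Z}/q\mathbb{Z}\cong \mathbb{Z}/(\prod_{q\in\mathcal{Q}}q)\mathbb{Z}$, and $\pi_{\mathcal{Q}}:\mathbb{Z}\to G_{\mathcal{Q}}$ is the natural projection. Characters of $G_{\mathcal{Q}}$ are identified with $\xi=\sum_{q\in\mathcal{Q}}\xi_q/q\in\bigoplus_{q\in\mathcal{Q}}(\frac1q\mathbb{Z}/\mathbb{Z})$, acting by $x\mapsto e(\xi x)$ with $e(t)=e^{2\pi i t}$; $|\xi|$ denotes the number of $q$ with $\xi_q\not\equiv 0$. Fourier coefficients: $\widehat g(\xi)=\mathbb{E}_{x\in G_{\mathcal{Q}}} g(x)\overline{e(\xi x)}$. The level-$d$ operator is $W_d g(x)=\sum_{\xi:|\xi|=d}\widehat g(\xi)e(\xi x)$. The lift $\Psi_{P,\mathcal{Q}}:B(P)\to B(G_{\mathcal{Q}})$ is defined by $(\Psi_{P,\mathcal{Q}}f)(\pi_{\mathcal{Q}}(x))=|P|^{-1}|G_{\mathcal{Q}}|f(x)$ for $x\in P$ and $0$ off $\pi_{\mathcal{Q}}(P)$ (well-defined since $\pi_{\mathcal{Q}}$ is injective on $P$). *)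

theory Defs
  imports "HOL-Analysis.Analysis"
begin

text \<open>The group G_Q = prod_{q in Q} Z/qZ, identified (via CRT) with Z/NZ, N = prod Q,
  represented by the residues {0..<N} as integers; pi_Q x = x mod N.\<close>

definition modulusQ :: "nat set \<Rightarrow> int" where
  "modulusQ Q = int (\<Prod>q\<in>Q. q)"

definition GQ :: "nat set \<Rightarrow> int set" where
  "GQ Q = {0..<modulusQ Q}"

definition piQ :: "nat set \<Rightarrow> int \<Rightarrow> int" where
  "piQ Q x = x mod modulusQ Q"

text \<open>Characters xi = sum_q xi_q / q with xi_q in {0..<q}; represented by xi :: nat => nat.\<close>

definition charsQ :: "nat set \<Rightarrow> (nat \<Rightarrow> nat) set" where
  "charsQ Q = (\<Pi>\<^sub>E q\<in>Q. {0..<q})"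

definition charWeight :: "nat set \<Rightarrow> (nat \<Rightarrow> nat) \<Rightarrow> nat" where
  "charWeight Q \<xi> = card {q\<in>Q. \<xi> q \<noteq> 0}"

definition charE :: "nat set \<Rightarrow> (nat \<Rightarrow> nat) \<Rightarrow> int \<Rightarrow> complex" where
  "charE Q \<xi> x = cis (2 * pi * (\<Sum>q\<in>Q. real (\<xi> q) * real_of_int x / real q))"

definition fourierQ :: "nat set \<Rightarrow> (int \<Rightarrow> complex) \<Rightarrow> (nat \<Rightarrow> nat) \<Rightarrow> complex" where
  "fourierQ Q g \<xi> = (\<Sum>x\<in>GQ Q. g x * cnj (charE Q \<xi> x)) / of_int (modulusQ Q)"

definition levelW :: "nat set \<Rightarrow> nat \<Rightarrow> (int \<Rightarrow> complex) \<Rightarrow> int \<Rightarrow> complex" where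
  "levelW Q d g x = (\<Sum>\<xi>\<in>{\<xi>\<in>charsQ Q. charWeight Q \<xi> = d}. fourierQ Q g \<xi> * charE Q \<xi> x)"

definition liftPsi :: "int set \<Rightarrow> nat set \<Rightarrow> (int \<Rightarrow> complex) \<Rightarrow> int \<Rightarrow> complex" where
  "liftPsi P Q f y =
     (if \<exists>x\<in>P. piQ Q x = y
      then of_int (modulusQ Q) / of_nat (card P) * f (THE x. x \<in> P \<and> piQ Q x = y)
      else 0)"

end

theory Submission
  imports Defs "HOL-Library.Real_Mod"
begin
lemma Ints_prod_mult:
  fixes U :: "nat set" and s :: "nat \<Rightarrow> int"
  assumes "finite U" "\<forall>q\<in>U. q > 0"
  shows "real (\<Prod>q\<in>U. q) * (\<Sum>q\<in>U. of_int (s q) / real q) \<in> \<int>"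
proof -
  have "real (\<Prod>q\<in>U. q) * (\<Sum>q\<in>U. of_int (s q) / real q)
      = (\<Sum>q\<in>U. of_int (s q) * real (\<Prod>q'\<in>U-{q}. q'))"
    unfolding sum_distrib_left
  proof (rule sum.cong[OF refl])
    fix q assume q: "q \<in> U"
    have "(\<Prod>q\<in>U. q) = q * (\<Prod>q'\<in>U-{q}. q')"
      using prod.remove[OF assms(1) q] by simp
    then show "real (\<Prod>q\<in>U. q) * (of_int (s q) / real q) = of_int (s q) * real (\<Prod>q'\<in>U-{q}. q')"
      using assms(2) q by (simp add: field_simps)
  qed
  also have "\<dots> \<in> \<int>"
    by (intro Ints_sum Ints_mult) (auto simp: Ints_of_nat)
  finally show ?thesis .
qed


lemma Ints_sum_frac_dvd:
  fixes U :: "nat set" and s :: "nat \<Rightarrow> int"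
  assumes "finite U" "\<forall>q\<in>U. q > 0" "\<forall>q1\<in>U. \<forall>q2\<in>U. q1 \<noteq> q2 \<longrightarrow> coprime q1 q2"
    and "(\<Sum>q\<in>U. of_int (s q) / real q) \<in> \<int>"
  shows "\<forall>q\<in>U. int q dvd s q"
  using assms
proof (induction U rule: finite_induct)
  case empty
  then show ?case by simp
next
  case (insert q0 U)
  have pos: "\<forall>q\<in>U. q > 0" "q0 > 0" using insert.prems by auto
  have cop: "\<forall>q1\<in>U. \<forall>q2\<in>U. q1 \<noteq> q2 \<longrightarrow> coprime q1 q2" using insert.prems by auto
  define P0 where "P0 = (\<Prod>q\<in>U. q)"
  have A: "real P0 * (\<Sum>q\<in>U. of_int (s q) / real q) \<in> \<int>"
    unfolding P0_def by (rule Ints_prod_mult[OF insert.hyps(1) pos(1)])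
  have tot: "of_int (s q0) / real q0 + (\<Sum>q\<in>U. of_int (s q) / real q) \<in> \<int>"
    using insert.prems(3) insert.hyps by simp
  have B: "real P0 * (of_int (s q0) / real q0 + (\<Sum>q\<in>U. of_int (s q) / real q)) \<in> \<int>"
    by (intro Ints_mult tot) (simp add: Ints_of_nat)
  have "real P0 * (of_int (s q0) / real q0) \<in> \<int>"
    using Ints_diff[OF B A] by (simp add: algebra_simps)
  then obtain k where k: "real P0 * (of_int (s q0) / real q0) = of_int k"
    by (auto elim: Ints_cases)
  then have "real P0 * of_int (s q0) = of_int k * real q0" using pos(2) by (simp add: field_simps)
  then have "int P0 * s q0 = k * int q0"
    by (metis of_int_eq_iff of_int_mult of_int_of_nat_eq)
  then have d1: "int q0 dvd int P0 * s q0" by simp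
  have "coprime q0 P0" unfolding P0_def
    apply (rule prod_coprime_right) using insert.prems(2) insert.hyps(2) by auto
  then have "coprime (int q0) (int P0)" by simp
  then have dq0: "int q0 dvd s q0" using d1 coprime_dvd_mult_right_iff by blast
  then obtain j where j: "s q0 = int q0 * j" by blast
  have "of_int (s q0) / real q0 = of_int j" using pos(2) j by simp
  then have "(\<Sum>q\<in>U. of_int (s q) / real q) \<in> \<int>"
    using Ints_diff[OF tot, of "of_int j"] by simp
  then have "\<forall>q\<in>U. int q dvd s q" using insert.IH pos cop insert.hyps by blast
  then show ?case using dq0 by simp
qed


lemma cis_2pi_eq_1_iff: "cis (2 * pi * y) = 1 \<longleftrightarrow> y \<in> \<int>"
proof
  assume "cis (2 * pi * y) = 1"
  then obtain n where "2 * pi * y = of_int n * (2 * pi)" using cis_eq_1_iff by blast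
  then have "y = of_int n" by simp
  then show "y \<in> \<int>" by simp
next
  assume "y \<in> \<int>" then show "cis (2 * pi * y) = 1" by simp
qed


lemma geom_root_bound:
  fixes w :: complex
  assumes "w ^ D = 1" "w \<noteq> 1" "D > 0" "norm w = 1"
  shows "norm (\<Sum>k<L. w ^ k) \<le> real D"
proof -
  have e1: "w ^ L = (w ^ D) ^ (L div D) * w ^ (L mod D)"
    unfolding power_mult[symmetric] power_add[symmetric] by simp
  have e2: "w ^ L = w ^ (L mod D)" using e1 assms(1) by simp
  have "(\<Sum>k<L. w ^ k) = (1 - w ^ L) / (1 - w)"
    using assms(2) sum_gp_strict[of w L] by simp
  also have "\<dots> = (1 - w ^ (L mod D)) / (1 - w)" using e2 by simp
  also have "\<dots> = (\<Sum>k<L mod D. w ^ k)"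
    using assms(2) sum_gp_strict[of w "L mod D"] by simp
  finally have "(\<Sum>k<L. w ^ k) = (\<Sum>k<L mod D. w ^ k)" .
  moreover have "norm (\<Sum>k<L mod D. w ^ k) \<le> (\<Sum>k<L mod D. norm (w ^ k))" by (rule norm_sum)
  moreover have "(\<Sum>k<L mod D. norm (w ^ k)) = real (L mod D)" using assms(4) by (simp add: norm_power)
  moreover have "real (L mod D) \<le> real D" using assms(3) by simp
  ultimately show ?thesis by simp
qed

lemma card_S_bound:
  assumes fin: "finite Q" and pos: "\<forall>q\<in>Q. q > 0" and ne: "Q \<noteq> {}"
  shows "card {\<xi>\<in>charsQ Q. charWeight Q \<xi> = d} \<le> Max Q ^ (2*d)"
proof -
  define M where "M = Max Q"
  define S where "S = {\<xi>\<in>charsQ Q. charWeight Q \<xi> = d}"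
  define enc where "enc = (\<lambda>\<xi>::nat\<Rightarrow>nat. map (\<lambda>q. (q, \<xi> q)) (sorted_list_of_set {q\<in>Q. \<xi> q \<noteq> 0}))"
  define A where "A = {1..M} \<times> {0..<M}"
  have setenc: "set (enc \<xi>) = (\<lambda>q. (q, \<xi> q)) ` {q\<in>Q. \<xi> q \<noteq> 0}" for \<xi>
    unfolding enc_def using fin by simp
  have inj: "inj_on enc S"
  proof (rule inj_onI)
    fix \<xi> \<eta> assume x: "\<xi> \<in> S" and y: "\<eta> \<in> S" and e: "enc \<xi> = enc \<eta>"
    have xe: "\<xi> \<in> charsQ Q" and ye: "\<eta> \<in> charsQ Q" using x y unfolding S_def by auto
    show "\<xi> = \<eta>"
    proof
      fix q
      show "\<xi> q = \<eta> q"
      proof (cases "q \<in> Q")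
        case False
        then show ?thesis using PiE_arb[OF xe[unfolded charsQ_def] False] PiE_arb[OF ye[unfolded charsQ_def] False] by simp
      next
        case True
        show ?thesis
        proof (cases "\<xi> q = 0")
          case False
          have "(q, \<xi> q) \<in> set (enc \<xi>)" unfolding setenc using False \<open>q\<in>Q\<close> by blast
          then have "(q, \<xi> q) \<in> set (enc \<eta>)" using e by simp
          then show ?thesis unfolding setenc by auto
        next
          case x0: True
          show ?thesis
          proof (cases "\<eta> q = 0")
            case True then show ?thesis using x0 by simp
          next
            case False
            have "(q, \<eta> q) \<in> set (enc \<eta>)" unfolding setenc using False \<open>q\<in>Q\<close> by blast
            then have "(q, \<eta> q) \<in> set (enc \<xi>)" using e by simp
            then show ?thesis unfolding setenc by auto
          qed
        qed
      qed
    qed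
  qed
  have sub: "enc ` S \<subseteq> {xs. set xs \<subseteq> A \<and> length xs = d}"
  proof
    fix xs assume "xs \<in> enc ` S"
    then obtain \<xi> where x: "\<xi> \<in> S" and xs: "xs = enc \<xi>" by blast
    have len: "length xs = d" using x fin unfolding xs enc_def S_def charWeight_def by simp
    have "set xs \<subseteq> A"
    proof
      fix z assume "z \<in> set xs"
      then obtain q where q: "q \<in> Q" "z = (q, \<xi> q)" using setenc xs by auto
      have "q \<le> M" unfolding M_def using fin q(1) by simp
      moreover have "\<xi> q < q" using x q(1) unfolding S_def charsQ_def by (auto simp: PiE_iff)
      moreover have "q \<ge> 1" using pos q(1) by auto
      ultimately show "z \<in> A" unfolding A_def using q(2) by auto
    qed
    then show "xs \<in> {xs. set xs \<subseteq> A \<and> length xs = d}" using len by simp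
  qed
  have "card S = card (enc ` S)" using inj by (simp add: card_image)
  also have "\<dots> \<le> card {xs. set xs \<subseteq> A \<and> length xs = d}"
    by (rule card_mono[OF _ sub]) (simp add: A_def finite_lists_length_eq)
  also have "\<dots> = (M * M) ^ d" by (simp add: card_lists_length_eq A_def)
  also have "\<dots> = M ^ (2 * d)" by (simp add: power_mult power2_eq_square)
  finally show ?thesis unfolding S_def M_def .
qed


lemma cis_int_periodic:
  assumes "y \<in> \<int>"
  shows "cis (2 * pi * (x + y)) = cis (2 * pi * x)"
proof -
  have "cis (2 * pi * (x + y)) = cis (2 * pi * x) * cis (2 * pi * y)"
    by (simp add: cis_mult algebra_simps)
  also have "cis (2 * pi * y) = 1" using assms by simp
  finally show ?thesis by simp
qed

lemma freq_bound:
  fixes Q :: "nat set" and t :: "nat \<Rightarrow> int" and r a :: int and N :: nat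
  assumes fin: "finite Q" and pos: "\<forall>q\<in>Q. q > 0"
    and cop: "\<forall>q1\<in>Q. \<forall>q2\<in>Q. q1 \<noteq> q2 \<longrightarrow> coprime q1 q2"
    and N: "N = (\<Prod>q\<in>Q. q)"
    and rcop: "\<forall>q\<in>Q. coprime r (int q)"
    and nI: "(\<Sum>q\<in>Q. of_int (t q) / real q) \<notin> \<int>"
  shows "(\<Sum>x\<in>{0..<int N}. cis (2 * pi * ((\<Sum>q\<in>Q. of_int (t q) / real q) * of_int x))) = 0"
    and "norm (\<Sum>k<L. cis (2 * pi * ((\<Sum>q\<in>Q. of_int (t q) / real q) * of_int (a + int k * r))))
          \<le> real (\<Prod>q\<in>{q\<in>Q. t q \<noteq> 0}. q)"
proof -
  define \<Theta> where "\<Theta> = (\<Sum>q\<in>Q. of_int (t q) / real q)"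
  define U where "U = {q\<in>Q. t q \<noteq> 0}"
  define D where "D = (\<Prod>q\<in>U. q)"
  have finU: "finite U" and UQ: "U \<subseteq> Q" using fin unfolding U_def by auto
  have posU: "\<forall>q\<in>U. q > 0" using pos UQ by auto
  have ThU: "\<Theta> = (\<Sum>q\<in>U. of_int (t q) / real q)"
    unfolding \<Theta>_def U_def by (rule sum.mono_neutral_right[OF fin]) auto
  have DI: "real D * \<Theta> \<in> \<int>" unfolding ThU D_def by (rule Ints_prod_mult[OF finU posU])
  have NI: "real N * \<Theta> \<in> \<int>" unfolding \<Theta>_def N by (rule Ints_prod_mult[OF fin pos])
  have Dpos: "D > 0" unfolding D_def using posU finU by (simp add: prod_pos)
  have Npos: "N > 0" unfolding N using pos fin by (simp add: prod_pos)
  define z where "z = cis (2 * pi * \<Theta>)"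
  have z1: "z \<noteq> 1" unfolding z_def cis_2pi_eq_1_iff using nI \<Theta>_def by simp
  have zN: "z ^ N = 1"
  proof -
    have "z ^ N = cis (2 * pi * (real N * \<Theta>))" unfolding z_def using Complex.DeMoivre[of "2*pi*\<Theta>" N] by (simp add: algebra_simps)
    then show ?thesis using cis_multiple_2pi[OF NI] by simp
  qed
  have "(\<Sum>x\<in>{0..<int N}. cis (2 * pi * (\<Theta> * of_int x))) = (\<Sum>k\<in>{0..<N}. cis (2 * pi * (\<Theta> * of_int (int k))))"
  proof -
    have ie: "{0..<int N} = int ` {0..<N}" by (simp add: image_int_atLeastLessThan)
    show ?thesis unfolding ie by (subst sum.reindex) auto
  qed
  also have "\<dots> = (\<Sum>k<N. z ^ k)"
    by (rule sum.cong) (auto simp: z_def Complex.DeMoivre algebra_simps)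
  also have "\<dots> = 0" using z1 zN by (simp add: sum_gp_strict)
  finally show "(\<Sum>x\<in>{0..<int N}. cis (2 * pi * ((\<Sum>q\<in>Q. of_int (t q) / real q) * of_int x))) = 0"
    unfolding \<Theta>_def .
  define w where "w = cis (2 * pi * (\<Theta> * of_int r))"
  have wD: "w ^ D = 1"
  proof -
    have "real D * (\<Theta> * of_int r) = (real D * \<Theta>) * of_int r" by simp
    also have "\<dots> \<in> \<int>" by (rule Ints_mult[OF DI Ints_of_int])
    finally have "real D * (\<Theta> * of_int r) \<in> \<int>" .
    moreover have "w ^ D = cis (2 * pi * (real D * (\<Theta> * of_int r)))" unfolding w_def using Complex.DeMoivre[of "2 * pi * (\<Theta> * of_int r)" D] by (simp add: algebra_simps)
    ultimately show ?thesis using cis_multiple_2pi by simp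
  qed
  have w1: "w \<noteq> 1"
  proof
    assume "w = 1"
    then have "\<Theta> * of_int r \<in> \<int>" unfolding w_def cis_2pi_eq_1_iff .
    moreover have "\<Theta> * of_int r = (\<Sum>q\<in>Q. of_int (r * t q) / real q)"
      unfolding \<Theta>_def sum_distrib_right by (rule sum.cong) auto
    ultimately have "\<forall>q\<in>Q. int q dvd r * t q" using Ints_sum_frac_dvd[OF fin pos cop] by metis
    then have dv: "\<forall>q\<in>Q. int q dvd t q"
      using rcop by (meson coprime_commute coprime_dvd_mult_right_iff)
    have "\<Theta> \<in> \<int>" unfolding \<Theta>_def
    proof (rule Ints_sum)
      fix q assume q: "q \<in> Q"
      then obtain j where "t q = int q * j" using dv by blast
      then show "of_int (t q) / real q \<in> \<int>" using pos q by simp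
    qed
    then show False using nI \<Theta>_def by simp
  qed
  have "(\<Sum>k<L. cis (2 * pi * (\<Theta> * of_int (a + int k * r)))) = cis (2 * pi * (\<Theta> * of_int a)) * (\<Sum>k<L. w ^ k)"
    unfolding sum_distrib_left
    by (rule sum.cong) (auto simp: w_def Complex.DeMoivre cis_mult algebra_simps)
  then have "norm (\<Sum>k<L. cis (2 * pi * (\<Theta> * of_int (a + int k * r)))) = norm (\<Sum>k<L. w ^ k)"
    by (simp add: norm_mult)
  also have "\<dots> \<le> real D" by (rule geom_root_bound[OF wD w1 Dpos]) (simp add: w_def)
  finally show "norm (\<Sum>k<L. cis (2 * pi * ((\<Sum>q\<in>Q. of_int (t q) / real q) * of_int (a + int k * r))))
          \<le> real (\<Prod>q\<in>{q\<in>Q. t q \<noteq> 0}. q)" unfolding \<Theta>_def D_def U_def .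
qed

lemma prod_cis: "(\<Prod>i\<in>A. cis (f i)) = cis (\<Sum>i\<in>A. f i)"
proof (induction A rule: infinite_finite_induct)
  case (insert x F) then show ?case by (simp add: cis_mult)
qed auto

lemma prod_if_split_pow:
  fixes A B :: "'a::comm_monoid_mult"
  shows "(\<Prod>i<2*m. if i < m then A else B) = A ^ m * B ^ m"
proof -
  have u: "{..<2*m} = {..<m} \<union> {m..<2*m}" by auto
  have "(\<Prod>i<2*m. if i < m then A else B) = (\<Prod>i<m. if i < m then A else B) * (\<Prod>i\<in>{m..<2*m}. if i < m then A else B)"
    unfolding u by (rule prod.union_disjoint) auto
  also have "(\<Prod>i<m. if i < m then A else B) = A ^ m" by simp
  also have "(\<Prod>i\<in>{m..<2*m}. if i < m then A else B) = (\<Prod>i\<in>{m..<2*m}. B)"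
    by (rule prod.cong) auto
  also have "\<dots> = B ^ m" by simp
  finally show ?thesis .
qed

lemma expansion:
  fixes S :: "(nat \<Rightarrow> nat) set" and c :: "(nat \<Rightarrow> nat) \<Rightarrow> complex" and \<theta> :: "(nat \<Rightarrow> nat) \<Rightarrow> real"
    and y :: int
  assumes finS: "finite S"
  shows "complex_of_real (cmod (\<Sum>\<xi>\<in>S. c \<xi> * cis (2*pi*(\<theta> \<xi> * of_int y))) ^ (2*m)) =
   (\<Sum>p\<in>PiE {..<2*m} (\<lambda>_. S). (\<Prod>i<2*m. if i<m then c (p i) else cnj (c (p i)))
      * cis (2*pi*((\<Sum>i<2*m. if i<m then \<theta> (p i) else - \<theta> (p i)) * of_int y)))"
proof -
  define z where "z = (\<Sum>\<xi>\<in>S. c \<xi> * cis (2*pi*(\<theta> \<xi> * of_int y)))"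
  define G where "G = (\<lambda>i \<xi>. (if i<m then c \<xi> else cnj (c \<xi>)) * cis (2*pi*((if i<m then \<theta> \<xi> else - \<theta> \<xi>) * of_int y)))"
  have "complex_of_real (cmod z ^ (2*m)) = complex_of_real ((cmod z)\<^sup>2) ^ m"
    by (simp add: power_mult)
  also have "\<dots> = (z * cnj z) ^ m" by (simp only: complex_norm_square)
  also have "\<dots> = (\<Prod>i<2*m. if i < m then z else cnj z)"
    by (simp add: prod_if_split_pow power_mult_distrib)
  also have "\<dots> = (\<Prod>i<2*m. \<Sum>\<xi>\<in>S. G i \<xi>)"
  proof (rule prod.cong[OF refl])
    fix i
    show "(if i < m then z else cnj z) = (\<Sum>\<xi>\<in>S. G i \<xi>)"
    proof (cases "i < m")
      case True then show ?thesis unfolding z_def G_def by simp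
    next
      case False
      have "cnj z = (\<Sum>\<xi>\<in>S. cnj (c \<xi>) * cis (- (2*pi*(\<theta> \<xi> * of_int y))))"
        unfolding z_def cnj_sum by (simp add: cis_cnj)
      then show ?thesis using False unfolding G_def by simp
    qed
  qed
  also have "\<dots> = (\<Sum>p\<in>PiE {..<2*m} (\<lambda>_. S). \<Prod>i<2*m. G i (p i))"
    by (rule prod_sum_PiE) (auto simp: finS)
  also have "\<dots> = (\<Sum>p\<in>PiE {..<2*m} (\<lambda>_. S). (\<Prod>i<2*m. if i<m then c (p i) else cnj (c (p i)))
      * cis (2*pi*((\<Sum>i<2*m. if i<m then \<theta> (p i) else - \<theta> (p i)) * of_int y)))"
  proof (rule sum.cong[OF refl])
    fix p
    have "(\<Prod>i<2*m. G i (p i)) = (\<Prod>i<2*m. if i<m then c (p i) else cnj (c (p i)))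
       * (\<Prod>i<2*m. cis (2*pi*((if i<m then \<theta> (p i) else - \<theta> (p i)) * of_int y)))"
      unfolding G_def prod.distrib by simp
    also have "(\<Prod>i<2*m. cis (2*pi*((if i<m then \<theta> (p i) else - \<theta> (p i)) * of_int y)))
       = cis (\<Sum>i<2*m. 2*pi*((if i<m then \<theta> (p i) else - \<theta> (p i)) * of_int y))"
      by (rule prod_cis)
    also have "(\<Sum>i<2*m. 2*pi*((if i<m then \<theta> (p i) else - \<theta> (p i)) * of_int y))
       = 2*pi*((\<Sum>i<2*m. if i<m then \<theta> (p i) else - \<theta> (p i)) * of_int y)"
      by (simp add: sum_distrib_left sum_distrib_right)
    finally show "(\<Prod>i<2*m. G i (p i)) = (\<Prod>i<2*m. if i<m then c (p i) else cnj (c (p i)))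
      * cis (2*pi*((\<Sum>i<2*m. if i<m then \<theta> (p i) else - \<theta> (p i)) * of_int y))" .
  qed
  finally show ?thesis unfolding z_def .
qed


theorem lemma3p4:
  fixes X :: real and Q :: "nat set" and P :: "int set"
    and d m :: nat and f :: "int \<Rightarrow> complex" and \<alpha> :: real
  assumes X_ge: "X \<ge> 1"
    and Q_fin: "finite Q"
    and Q_pos: "\<forall>q\<in>Q. q > 0"
    and Q_coprime: "\<forall>q1\<in>Q. \<forall>q2\<in>Q. q1 \<noteq> q2 \<longrightarrow> coprime q1 q2"
    and Q_prod: "real (\<Prod>q\<in>Q. q) \<ge> X"
    and P_AP: "\<exists>a r L. r > 0 \<and> (\<forall>q\<in>Q. coprime r (int q))
                  \<and> P = {a + int k * r | k. k < L} \<and> real L \<ge> X powr (3/4)"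
    and P_range: "\<forall>x\<in>P. 1 \<le> x \<and> real_of_int x \<le> X"
    and d_pos: "d \<ge> 1" and m_pos: "m \<ge> 1"
    and dm_bound: "real (Max Q) ^ (d * m) \<le> X powr (1/16)"
    and alpha_def: "\<alpha> = (\<Sum>x\<in>P. cmod (f x)) / real (card P)"
  shows "(\<Sum>x\<in>piQ Q ` P. cmod (levelW Q d (liftPsi P Q f) x) ^ (2*m)) / real (card (piQ Q ` P))
         \<le> (\<Sum>x\<in>GQ Q. cmod (levelW Q d (liftPsi P Q f) x) ^ (2*m)) / real (card (GQ Q))
            + \<alpha> ^ (2*m) * X powr (-1/4)"
proof -
  obtain a r L where rpos: "r > 0" and rcop: "\<forall>q\<in>Q. coprime r (int q)"
    and Pdef: "P = {a + int k * r | k. k < L}" and Lbig: "real L \<ge> X powr (3/4)"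
    using P_AP by blast
  define N0 where "N0 = (\<Prod>q\<in>Q. q)"
  have Nmod: "modulusQ Q = int N0" by (simp add: modulusQ_def N0_def)
  have N0pos: "N0 > 0" unfolding N0_def using Q_pos Q_fin by (simp add: prod_pos)
  have XN: "X \<le> real N0" using Q_prod N0_def by simp
  have GQ_eq: "GQ Q = {0..<int N0}" by (simp add: GQ_def Nmod)
  have cardG: "card (GQ Q) = N0" by (simp add: GQ_eq)
  have piQ_eq: "\<And>x. piQ Q x = x mod int N0" by (simp add: piQ_def Nmod)
  have X34: "X powr (3/4) \<ge> 1" by (rule ge_one_powr_ge_zero[OF X_ge]) simp
  have Lpos: "L > 0" using Lbig X34 by (cases L) auto
  have Pimg: "P = (\<lambda>k. a + int k * r) ` {..<L}" unfolding Pdef by auto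
  have injk: "inj_on (\<lambda>k. a + int k * r) {..<L}"
    by (rule inj_onI) (use rpos in simp)
  have cardP: "card P = L" unfolding Pimg using injk by (simp add: card_image)
  have finP: "finite P" unfolding Pimg by simp
  have injpi: "inj_on (piQ Q) P"
  proof (rule inj_onI)
    fix x y assume x: "x \<in> P" and y: "y \<in> P" and e: "piQ Q x = piQ Q y"
    show "x = y"
    proof (rule ccontr)
      assume ne: "x \<noteq> y"
      have "int N0 dvd x - y" using e unfolding piQ_eq by (simp add: mod_eq_dvd_iff)
      then have "\<bar>int N0\<bar> \<le> \<bar>x - y\<bar>" using ne by (intro dvd_imp_le_int) auto
      then have "real N0 \<le> \<bar>real_of_int x - real_of_int y\<bar>"
        by (metis of_int_abs of_int_diff of_int_le_iff of_int_of_nat_eq abs_of_nat)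
      moreover have "\<bar>real_of_int x - real_of_int y\<bar> \<le> X - 1"
      proof -
        have "1 \<le> x" "real_of_int x \<le> X" "1 \<le> y" "real_of_int y \<le> X" using P_range x y by auto
        moreover have "(1::real) \<le> real_of_int x" "(1::real) \<le> real_of_int y" using calculation by simp_all
        ultimately show ?thesis by linarith
      qed
      ultimately show False using XN by simp
    qed
  qed
  define \<Gamma> where "\<Gamma> = piQ Q ` P"
  have cardGam: "card \<Gamma> = L" unfolding \<Gamma>_def using injpi cardP by (simp add: card_image)
  have GamG: "\<Gamma> \<subseteq> GQ Q" unfolding \<Gamma>_def GQ_eq piQ_eq using N0pos by auto
  have finG: "finite (GQ Q)" by (simp add: GQ_eq)
  define g where "g = liftPsi P Q f"
  have g_out: "\<And>y. y \<notin> \<Gamma> \<Longrightarrow> g y = 0" unfolding g_def liftPsi_def \<Gamma>_def by auto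
  have g_in: "\<And>x. x \<in> P \<Longrightarrow> g (piQ Q x) = of_int (int N0) / of_nat L * f x"
  proof -
    fix x assume x: "x \<in> P"
    have "(THE x'. x' \<in> P \<and> piQ Q x' = piQ Q x) = x"
      using x injpi by (auto intro!: the_equality dest: inj_onD)
    then show "g (piQ Q x) = of_int (int N0) / of_nat L * f x"
      unfolding g_def liftPsi_def using x cardP Nmod by auto
  qed
  have alpha_nn: "\<alpha> \<ge> 0" unfolding alpha_def by (simp add: sum_nonneg)
  have c_bound: "\<And>\<xi>. cmod (fourierQ Q g \<xi>) \<le> \<alpha>"
  proof -
    fix \<xi>
    have "cmod (fourierQ Q g \<xi>) = cmod (\<Sum>x\<in>GQ Q. g x * cnj (charE Q \<xi> x)) / real N0"
      unfolding fourierQ_def Nmod by (simp add: norm_divide)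
    also have "\<dots> \<le> (\<Sum>x\<in>GQ Q. cmod (g x)) / real N0"
    proof (rule divide_right_mono)
      have "cmod (\<Sum>x\<in>GQ Q. g x * cnj (charE Q \<xi> x)) \<le> (\<Sum>x\<in>GQ Q. cmod (g x * cnj (charE Q \<xi> x)))"
        by (rule norm_sum)
      also have "\<dots> = (\<Sum>x\<in>GQ Q. cmod (g x))" by (simp add: norm_mult charE_def)
      finally show "cmod (\<Sum>x\<in>GQ Q. g x * cnj (charE Q \<xi> x)) \<le> (\<Sum>x\<in>GQ Q. cmod (g x))" .
    qed simp
    also have "(\<Sum>x\<in>GQ Q. cmod (g x)) = (\<Sum>x\<in>\<Gamma>. cmod (g x))"
      by (rule sum.mono_neutral_right[OF finG GamG]) (auto simp: g_out)
    also have "\<dots> = (\<Sum>x\<in>P. cmod (g (piQ Q x)))" unfolding \<Gamma>_def using injpi by (simp add: sum.reindex)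
    also have "\<dots> = (\<Sum>x\<in>P. real N0 / real L * cmod (f x))"
      by (rule sum.cong[OF refl]) (simp add: g_in norm_mult norm_divide)
    also have "\<dots> = real N0 * \<alpha>" unfolding alpha_def cardP sum_distrib_left[symmetric] by simp
    finally show "cmod (fourierQ Q g \<xi>) \<le> \<alpha>" using N0pos by simp
  qed
  define S where "S = {\<xi>\<in>charsQ Q. charWeight Q \<xi> = d}"
  define \<theta> where "\<theta> = (\<lambda>\<xi>::nat\<Rightarrow>nat. \<Sum>q\<in>Q. real (\<xi> q) / real q)"
  define c where "c = fourierQ Q g"
  have finS: "finite S" unfolding S_def charsQ_def using Q_fin by (simp add: finite_PiE)
  have charE_eq: "\<And>\<xi> y. charE Q \<xi> y = cis (2*pi*(\<theta> \<xi> * of_int y))"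
    unfolding charE_def \<theta>_def by (simp add: sum_distrib_right)
  have W_eq: "\<And>y. levelW Q d g y = (\<Sum>\<xi>\<in>S. c \<xi> * cis (2*pi*(\<theta> \<xi> * of_int y)))"
    unfolding levelW_def S_def c_def charE_eq by simp
  define t where "t = (\<lambda>(p::nat\<Rightarrow>nat\<Rightarrow>nat) q. \<Sum>i<2*m. if i<m then int (p i q) else - int (p i q))"
  define \<Theta> where "\<Theta> = (\<lambda>p. \<Sum>q\<in>Q. of_int (t p q) / real q)"
  have \<Theta>eq: "\<And>p. (\<Sum>i<2*m. if i<m then \<theta> (p i) else - \<theta> (p i)) = \<Theta> p"
  proof -
    fix p :: "nat\<Rightarrow>nat\<Rightarrow>nat"
    have "\<Theta> p = (\<Sum>q\<in>Q. \<Sum>i<2*m. (if i<m then real (p i q) else - real (p i q)) / real q)"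
      unfolding \<Theta>_def t_def of_int_sum sum_divide_distrib by (rule sum.cong) (auto intro!: sum.cong)
    also have "\<dots> = (\<Sum>i<2*m. \<Sum>q\<in>Q. (if i<m then real (p i q) else - real (p i q)) / real q)"
      by (rule sum.swap)
    also have "\<dots> = (\<Sum>i<2*m. if i<m then \<theta> (p i) else - \<theta> (p i))"
      by (rule sum.cong) (auto simp: \<theta>_def sum_negf)
    finally show "(\<Sum>i<2*m. if i<m then \<theta> (p i) else - \<theta> (p i)) = \<Theta> p" by simp
  qed
  define I where "I = PiE {..<2*m} (\<lambda>_. S)"
  define b where "b = (\<lambda>p. \<Prod>i<2*m. if i<m then c (p i) else cnj (c (p i)))"
  define \<phi> where "\<phi> = (\<lambda>p (y::int). cis (2*pi*(\<Theta> p * of_int y)))"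
  have finI: "finite I" unfolding I_def using finS by (simp add: finite_PiE)
  have expn: "\<And>y. complex_of_real (cmod (levelW Q d g y) ^ (2*m)) = (\<Sum>p\<in>I. b p * \<phi> p y)"
    unfolding W_eq I_def b_def \<phi>_def expansion[OF finS] \<Theta>eq ..
  define h where "h = (\<lambda>y. cmod (levelW Q d g y) ^ (2*m))"
  define A\<Gamma> where "A\<Gamma> = (\<lambda>p. (\<Sum>y\<in>\<Gamma>. \<phi> p y) / of_nat L)"
  define AG where "AG = (\<lambda>p. (\<Sum>y\<in>GQ Q. \<phi> p y) / of_nat N0)"
  have finGam: "finite \<Gamma>" unfolding \<Gamma>_def using finP by simp
  have LHS: "complex_of_real ((\<Sum>y\<in>\<Gamma>. h y) / real (card \<Gamma>)) = (\<Sum>p\<in>I. b p * A\<Gamma> p)"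
  proof -
    have "complex_of_real ((\<Sum>y\<in>\<Gamma>. h y) / real (card \<Gamma>)) = (\<Sum>y\<in>\<Gamma>. complex_of_real (h y)) / of_nat L"
      by (simp add: cardGam)
    also have "\<dots> = (\<Sum>y\<in>\<Gamma>. \<Sum>p\<in>I. b p * \<phi> p y) / of_nat L" unfolding h_def expn ..
    also have "\<dots> = (\<Sum>p\<in>I. b p * A\<Gamma> p)"
      unfolding A\<Gamma>_def sum_divide_distrib times_divide_eq_right[symmetric] sum_distrib_left
      by (subst sum.swap) simp
    finally show ?thesis .
  qed
  have RHS: "complex_of_real ((\<Sum>y\<in>GQ Q. h y) / real (card (GQ Q))) = (\<Sum>p\<in>I. b p * AG p)"
  proof -
    have "complex_of_real ((\<Sum>y\<in>GQ Q. h y) / real (card (GQ Q))) = (\<Sum>y\<in>GQ Q. complex_of_real (h y)) / of_nat N0"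
      by (simp add: cardG)
    also have "\<dots> = (\<Sum>y\<in>GQ Q. \<Sum>p\<in>I. b p * \<phi> p y) / of_nat N0" unfolding h_def expn ..
    also have "\<dots> = (\<Sum>p\<in>I. b p * AG p)"
      unfolding AG_def sum_divide_distrib times_divide_eq_right[symmetric] sum_distrib_left
      by (subst sum.swap) simp
    finally show ?thesis .
  qed
  have b_bound: "\<And>p. cmod (b p) \<le> \<alpha> ^ (2*m)"
  proof -
    fix p
    have "cmod (b p) = (\<Prod>i<2*m. cmod (if i<m then c (p i) else cnj (c (p i))))"
      unfolding b_def by (rule prod_norm[symmetric])
    also have "\<dots> \<le> (\<Prod>i<2*m. \<alpha>)"
      by (rule prod_mono) (auto simp: c_def c_bound)
    finally show "cmod (b p) \<le> \<alpha> ^ (2*m)" by simp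
  qed
  have Qne: "\<And>p. p \<in> I \<Longrightarrow> Q \<noteq> {}"
  proof
    fix p assume p: "p \<in> I" and e: "Q = {}"
    have "p 0 \<in> S" using p m_pos unfolding I_def by (auto simp: PiE_iff)
    then have "card {q\<in>Q. p 0 q \<noteq> 0} = d" unfolding S_def charWeight_def by simp
    then show False using e d_pos by simp
  qed
  have M1: "\<And>p. p \<in> I \<Longrightarrow> Max Q \<ge> 1"
  proof -
    fix p assume "p \<in> I"
    then have "Q \<noteq> {}" by (rule Qne)
    then have "Max Q \<in> Q" using Q_fin by simp
    then show "Max Q \<ge> 1" using Q_pos by (simp add: Suc_le_eq)
  qed
  have XM: "\<And>p. p \<in> I \<Longrightarrow> real (Max Q) ^ (2*m*d) \<le> X powr (1/8)"
  proof -
    fix p assume "p \<in> I"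
    have "real (Max Q) ^ (2*m*d) = (real (Max Q) ^ (d*m)) ^ 2"
    proof -
      have "2*m*d = d*m*2" by simp
      then show ?thesis by (simp only: power_mult)
    qed
    also have "\<dots> \<le> (X powr (1/16)) ^ 2"
      by (rule power_mono[OF dm_bound]) simp
    also have "\<dots> = X powr (1/8)" using X_ge by (subst powr_power) auto
    finally show "real (Max Q) ^ (2*m*d) \<le> X powr (1/8)" .
  qed
  have prodU: "\<And>p. p \<in> I \<Longrightarrow> real (\<Prod>q\<in>{q\<in>Q. t p q \<noteq> 0}. q) \<le> X powr (1/8)"
  proof -
    fix p assume p: "p \<in> I"
    define U where "U = {q\<in>Q. t p q \<noteq> 0}"
    have finU: "finite U" unfolding U_def using Q_fin by simp
    have Usub: "U \<subseteq> (\<Union>i<2*m. {q\<in>Q. p i q \<noteq> 0})"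
    proof
      fix q assume q: "q \<in> U"
      show "q \<in> (\<Union>i<2*m. {q\<in>Q. p i q \<noteq> 0})"
      proof (rule ccontr)
        assume "q \<notin> (\<Union>i<2*m. {q\<in>Q. p i q \<noteq> 0})"
        then have "\<forall>i<2*m. p i q = 0" using q unfolding U_def by auto
        then have "t p q = 0" unfolding t_def by (auto intro: sum.neutral)
        then show False using q unfolding U_def by simp
      qed
    qed
    have "card U \<le> card (\<Union>i<2*m. {q\<in>Q. p i q \<noteq> 0})"
      by (rule card_mono[OF _ Usub]) (use Q_fin in auto)
    also have "\<dots> \<le> (\<Sum>i<2*m. card {q\<in>Q. p i q \<noteq> 0})" by (rule card_UN_le) simp
    also have "\<dots> = (\<Sum>i<2*m. d)"
    proof (rule sum.cong[OF refl])
      fix i assume "i \<in> {..<2*m}"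
      then have "p i \<in> S" using p unfolding I_def by (auto simp: PiE_iff)
      then show "card {q\<in>Q. p i q \<noteq> 0} = d" unfolding S_def charWeight_def by simp
    qed
    finally have cU: "card U \<le> 2*m*d" by simp
    have "(\<Prod>q\<in>U. q) \<le> (\<Prod>q\<in>U. Max Q)"
      by (rule prod_mono) (use Q_fin in \<open>auto simp: U_def\<close>)
    also have "\<dots> = Max Q ^ card U" by simp
    also have "\<dots> \<le> Max Q ^ (2*m*d)" by (rule power_increasing[OF cU M1[OF p]])
    finally have "real (\<Prod>q\<in>U. q) \<le> real (Max Q) ^ (2*m*d)" by (metis of_nat_le_iff of_nat_power)
    also have "\<dots> \<le> X powr (1/8)" by (rule XM[OF p])
    finally show "real (\<Prod>q\<in>{q\<in>Q. t p q \<noteq> 0}. q) \<le> X powr (1/8)" unfolding U_def .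
  qed
  have Xpos: "X > 0" using X_ge by simp
  have L_bound: "X powr (1/8) / real L \<le> X powr (-5/8)"
  proof -
    have "X powr (1/8) / real L \<le> X powr (1/8) / X powr (3/4)"
      by (rule divide_left_mono[OF Lbig]) (use Xpos Lpos in auto)
    also have "\<dots> = X powr (1/8 - 3/4)" by (rule powr_diff[symmetric])
    finally show ?thesis by simp
  qed
  have diff_bound: "\<And>p. p \<in> I \<Longrightarrow> cmod (A\<Gamma> p - AG p) \<le> X powr (-5/8)"
  proof -
    fix p assume p: "p \<in> I"
    show "cmod (A\<Gamma> p - AG p) \<le> X powr (-5/8)"
    proof (cases "\<Theta> p \<in> \<int>")
      case True
      have one: "\<And>y. \<phi> p y = 1"
      proof -
        fix y :: int
        have "\<Theta> p * of_int y \<in> \<int>" using True by (intro Ints_mult) auto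
        then show "\<phi> p y = 1" unfolding \<phi>_def by simp
      qed
      have "A\<Gamma> p = 1" unfolding A\<Gamma>_def one using cardGam Lpos by simp
      moreover have "AG p = 1" unfolding AG_def one using cardG N0pos by simp
      ultimately show ?thesis by simp
    next
      case False
      have nI: "(\<Sum>q\<in>Q. of_int (t p q) / real q) \<notin> \<int>" using False unfolding \<Theta>_def .
      note fb = freq_bound[OF Q_fin Q_pos Q_coprime N0_def rcop nI]
      have "AG p = 0" unfolding AG_def GQ_eq \<phi>_def \<Theta>_def using fb(1) by simp
      have NI: "real N0 * \<Theta> p \<in> \<int>" unfolding \<Theta>_def N0_def by (rule Ints_prod_mult[OF Q_fin Q_pos])
      have per: "\<And>x. \<phi> p (piQ Q x) = \<phi> p x"
      proof -
        fix x :: int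
        have e1: "\<Theta> p * of_int (piQ Q x) = \<Theta> p * of_int x + (- (real N0 * \<Theta> p) * of_int (x div int N0))"
        proof -
          have "piQ Q x = x - int N0 * (x div int N0)" unfolding piQ_eq by (metis minus_mult_div_eq_mod)
          then have pe: "real_of_int (piQ Q x) = real_of_int x - real N0 * real_of_int (x div int N0)"
            by (metis of_int_diff of_int_mult of_int_of_nat_eq)
          show ?thesis by (subst pe) (simp add: algebra_simps)
        qed
        have zI: "- (real N0 * \<Theta> p) * of_int (x div int N0) \<in> \<int>" using NI by (intro Ints_mult) auto
        have "\<phi> p (piQ Q x) = cis (2 * pi * (\<Theta> p * of_int x + (- (real N0 * \<Theta> p) * of_int (x div int N0))))"
          unfolding \<phi>_def e1 ..
        also have "\<dots> = cis (2 * pi * (\<Theta> p * of_int x))" by (rule cis_int_periodic[OF zI])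
        finally show "\<phi> p (piQ Q x) = \<phi> p x" unfolding \<phi>_def .
      qed
      have "(\<Sum>y\<in>\<Gamma>. \<phi> p y) = (\<Sum>x\<in>P. \<phi> p (piQ Q x))" unfolding \<Gamma>_def using injpi by (simp add: sum.reindex)
      also have "\<dots> = (\<Sum>x\<in>P. \<phi> p x)" using per by simp
      also have "\<dots> = (\<Sum>k<L. \<phi> p (a + int k * r))" unfolding Pimg using injk by (simp add: sum.reindex)
      finally have "cmod (\<Sum>y\<in>\<Gamma>. \<phi> p y) \<le> real (\<Prod>q\<in>{q\<in>Q. t p q \<noteq> 0}. q)"
        using fb(2)[where L=L and a=a] unfolding \<phi>_def \<Theta>_def by simp
      also have "\<dots> \<le> X powr (1/8)" by (rule prodU[OF p])
      finally have "cmod (A\<Gamma> p) \<le> X powr (1/8) / real L"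
        unfolding A\<Gamma>_def using Lpos by (simp add: norm_divide divide_right_mono)
      also have "\<dots> \<le> X powr (-5/8)" by (rule L_bound)
      finally show ?thesis using \<open>AG p = 0\<close> by simp
    qed
  qed
  have cardI: "I \<noteq> {} \<Longrightarrow> real (card I) \<le> X powr (1/4)"
  proof -
    assume "I \<noteq> {}"
    then obtain p where p: "p \<in> I" by blast
    have "card I = card S ^ (2*m)" unfolding I_def by (simp add: card_PiE)
    also have "\<dots> \<le> (Max Q ^ (2*d)) ^ (2*m)"
      unfolding S_def by (rule power_mono[OF card_S_bound[OF Q_fin Q_pos Qne[OF p]]]) simp
    finally have "real (card I) \<le> real ((Max Q ^ (2*d)) ^ (2*m))" by (simp only: of_nat_le_iff)
    also have "\<dots> = (real (Max Q) ^ (d*m)) ^ 4"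
    proof -
      have "(2*d)*(2*m) = (d*m)*4" by simp
      then show ?thesis by (simp only: of_nat_power power_mult[symmetric])
    qed
    also have "\<dots> \<le> (X powr (1/16)) ^ 4" by (rule power_mono[OF dm_bound]) simp
    also have "\<dots> = X powr (1/4)" using X_ge by (subst powr_power) auto
    finally show ?thesis .
  qed
  have main: "(\<Sum>y\<in>\<Gamma>. h y) / real (card \<Gamma>) - (\<Sum>y\<in>GQ Q. h y) / real (card (GQ Q)) \<le> \<alpha> ^ (2*m) * X powr (-1/4)"
  proof -
    define \<delta> where "\<delta> = (\<Sum>y\<in>\<Gamma>. h y) / real (card \<Gamma>) - (\<Sum>y\<in>GQ Q. h y) / real (card (GQ Q))"
    have "complex_of_real \<delta> = (\<Sum>p\<in>I. b p * (A\<Gamma> p - AG p))"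
      unfolding \<delta>_def of_real_diff LHS RHS by (simp add: sum_subtractf right_diff_distrib)
    then have "\<delta> \<le> cmod (\<Sum>p\<in>I. b p * (A\<Gamma> p - AG p))" by (metis abs_ge_self norm_of_real)
    also have "\<dots> \<le> (\<Sum>p\<in>I. cmod (b p * (A\<Gamma> p - AG p)))" by (rule norm_sum)
    also have "\<dots> \<le> (\<Sum>p\<in>I. \<alpha> ^ (2*m) * X powr (-5/8))"
    proof (rule sum_mono)
      fix p assume p: "p \<in> I"
      show "cmod (b p * (A\<Gamma> p - AG p)) \<le> \<alpha> ^ (2*m) * X powr (-5/8)"
        unfolding norm_mult by (rule mult_mono[OF b_bound diff_bound[OF p]]) (auto simp: alpha_nn)
    qed
    also have "\<dots> = real (card I) * (\<alpha> ^ (2*m) * X powr (-5/8))" by simp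
    also have "\<dots> \<le> \<alpha> ^ (2*m) * X powr (-1/4)"
    proof (cases "I = {}")
      case True then show ?thesis using alpha_nn by simp
    next
      case False
      have "real (card I) * (\<alpha> ^ (2*m) * X powr (-5/8)) \<le> X powr (1/4) * (\<alpha> ^ (2*m) * X powr (-5/8))"
        by (rule mult_right_mono[OF cardI[OF False]]) (simp add: alpha_nn)
      also have "\<dots> = \<alpha> ^ (2*m) * (X powr (1/4) * X powr (-5/8))" by simp
      also have "X powr (1/4) * X powr (-5/8) = X powr (1/4 + -5/8)" by (rule powr_add[symmetric])
      also have "X powr (1/4 + -5/8) \<le> X powr (-1/4)" by (rule powr_mono[OF _ X_ge]) simp
      finally show ?thesis using alpha_nn by (simp add: mult_left_mono)
    qed
    finally show ?thesis unfolding \<delta>_def .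
  qed
  then show ?thesis unfolding \<Gamma>_def h_def g_def by simp
qed

end
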